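(* Let $A,G,Q\in\mathbb{C}^{n\times n}$ with $G=G^*$, $Q=Q^*$, and let $\mathbf{X}$ be an interval matrix containing at least one solution of $A^*X+XA+Q=XGX$. If every matrix $A-GM$ with $M\in\mathbf{X}$ is Hurwitz stable, then $\mathbf{X}$ contains exactly one solution of this equation, and that solution is the stabilizing solution (in particular it is Hermitian). *)

theory Defs
  imports "HOL-Analysis.Analysis"
begin

definition cadj :: "complex^'n^'n \<Rightarrow> complex^'n^'n" where
  "cadj M = (\<chi> i j. cnj (M $ j $ i))"

definition hermitian :: "complex^'n^'n \<Rightarrow> bool" where
  "hermitian M \<longleftrightarrow> cadj M = M"

definition is_eigenvalue :: "complex^'n^'n \<Rightarrow> complex \<Rightarrow> bool" where
  "is_eigenvalue M z \<longleftrightarrow> (\<exists>v. v \<noteq> 0 \<and> M *v v = z *s v)"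

definition hurwitz_stable :: "complex^'n^'n \<Rightarrow> bool" where
  "hurwitz_stable M \<longleftrightarrow> (\<forall>z. is_eigenvalue M z \<longrightarrow> Re z < 0)"

definition care_solution :: "complex^'n^'n \<Rightarrow> complex^'n^'n \<Rightarrow> complex^'n^'n \<Rightarrow> complex^'n^'n \<Rightarrow> bool" where
  "care_solution A G Q X \<longleftrightarrow> cadj A ** X + X ** A + Q = X ** G ** X"

definition stabilizing_solution :: "complex^'n^'n \<Rightarrow> complex^'n^'n \<Rightarrow> complex^'n^'n \<Rightarrow> complex^'n^'n \<Rightarrow> bool" where
  "stabilizing_solution A G Q X \<longleftrightarrow>
     care_solution A G Q X \<and> hermitian X \<and> hurwitz_stable (A - G ** X)"

definition interval_matrix :: "complex^'n^'n \<Rightarrow> complex^'n^'n \<Rightarrow> (complex^'n^'n) set" where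
  "interval_matrix L U = {M. \<forall>i j.
      Re (L $ i $ j) \<le> Re (M $ i $ j) \<and> Re (M $ i $ j) \<le> Re (U $ i $ j) \<and>
      Im (L $ i $ j) \<le> Im (M $ i $ j) \<and> Im (M $ i $ j) \<le> Im (U $ i $ j)}"

end

theory Submission imports Defs "HOL-Computational_Algebra.Fundamental_Theorem_Algebra" begin

type_synonym ('n) cm = "complex^'n^'n"

lemma mm_sub_l: "(A::('n::finite) cm) ** (B - C) = A ** B - A ** C"
  by (vector matrix_matrix_mult_def sum_subtractf right_diff_distrib)
lemma mm_sub_r: "((B::('n::finite) cm) - C) ** A = B ** A - C ** A"
  by (vector matrix_matrix_mult_def sum_subtractf left_diff_distrib)
lemma mm_add_r: "((B::('n::finite) cm) + C) ** A = B ** A + C ** A"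
  by (vector matrix_matrix_mult_def sum.distrib distrib_right)
lemma mm_neg_r: "(A::('n::finite) cm) ** (- B) = - (A ** B)"
  by (vector matrix_matrix_mult_def sum_negf)
lemma mat_mul_l: "mat r ** (A::('n::finite) cm) = (\<chi> i j. r * A$i$j)"
  unfolding matrix_matrix_mult_def mat_def
  by (auto simp: vec_eq_iff if_distrib if_distribR sum.delta cong: if_cong)
lemma mat_mul_r: "(A::('n::finite) cm) ** mat r = (\<chi> i j. r * A$i$j)"
  unfolding matrix_matrix_mult_def mat_def
  by (auto simp: vec_eq_iff if_distrib if_distribR sum.delta' cong: if_cong)
lemma mat_comm: "mat r ** (A::('n::finite) cm) = A ** mat r"
  by (simp add: mat_mul_l mat_mul_r)
lemma mat_vec: "mat r *v (v::complex^'n) = r *s v"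
  unfolding matrix_vector_mult_def mat_def
  by (auto simp: vec_eq_iff if_distrib if_distribR sum.delta cong: if_cong)
lemma mv_scale: "(A::('n::finite) cm) *v (r *s v) = r *s (A *v v)"
  by (simp add: matrix_vector_mult_def vec_eq_iff sum_distrib_left mult_ac)

lemma eig_iff: "is_eigenvalue M z \<longleftrightarrow> (\<exists>v. v \<noteq> 0 \<and> (M - mat z) *v v = 0)"
  unfolding is_eigenvalue_def by (simp add: matrix_vector_mult_diff_rdistrib mat_vec)

lemma eig_det: "is_eigenvalue (M::('n::finite) cm) z \<longleftrightarrow> det (M - mat z) = 0"
proof -
  have "(\<exists>v. v \<noteq> 0 \<and> (M - mat z) *v v = 0) \<longleftrightarrow> \<not> invertible (M - mat z)"
    using matrix_left_invertible_ker[of "M - mat z"] invertible_left_inverse[of "M - mat z"]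
    by blast
  then show ?thesis using eig_iff invertible_det_nz by blast
qed

lemma det_cadj: "det (cadj (M::('n::finite) cm)) = cnj (det M)"
proof -
  have "cadj M = transpose (\<chi> i j. cnj (M$i$j))"
    by (simp add: cadj_def transpose_def)
  then have "det (cadj M) = det (\<chi> i j. cnj (M$i$j))" by (simp add: det_transpose)
  also have "\<dots> = cnj (det M)" by (simp add: det_def)
  finally show ?thesis .
qed

lemma cadj_sub: "cadj ((A::('n::finite) cm) - B) = cadj A - cadj B"
  by (simp add: cadj_def vec_eq_iff)
lemma cadj_add: "cadj ((A::('n::finite) cm) + B) = cadj A + cadj B"
  by (simp add: cadj_def vec_eq_iff)
lemma cadj_mat: "cadj (mat r :: ('n::finite) cm) = mat (cnj r)"
  by (simp add: cadj_def vec_eq_iff mat_def)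
lemma cadj_mul: "cadj ((A::('n::finite) cm) ** B) = cadj B ** cadj A"
  by (simp add: cadj_def vec_eq_iff matrix_matrix_mult_def mult.commute)
lemma cadj_cadj: "cadj (cadj (A::('n::finite) cm)) = A"
  by (simp add: cadj_def vec_eq_iff)

lemma eig_cadj: "is_eigenvalue (cadj (N::('n::finite) cm)) z \<Longrightarrow> is_eigenvalue N (cnj z)"
proof -
  assume "is_eigenvalue (cadj N) z"
  then have "det (cadj N - mat z) = 0" by (simp add: eig_det)
  moreover have "cadj N - mat z = cadj (N - mat (cnj z))" by (simp add: cadj_sub cadj_mat)
  ultimately have "det (N - mat (cnj z)) = 0" by (simp add: det_cadj)
  then show ?thesis by (simp add: eig_det)
qed


definition pv :: "complex poly \<Rightarrow> ('n::finite) cm \<Rightarrow> complex^'n \<Rightarrow> complex^'n" where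
  "pv p S x = fold_coeffs (\<lambda>a v. a *s x + S *v v) p 0"

lemma pv_0[simp]: "pv 0 S x = 0" by (simp add: pv_def)

lemma pv_pCons[simp]: "pv (pCons a p) S x = a *s x + S *v pv p S x"
proof (cases "p = 0")
  case True
  then show ?thesis
    by (cases "a = 0") (simp_all add: pv_def)
next
  case False
  then show ?thesis by (simp add: pv_def)
qed

lemma pv_add: "pv (p + q) S x = pv p S x + pv q S x"
proof (induction p arbitrary: q)
  case (pCons a p)
  obtain b q' where q: "q = pCons b q'" by (cases q)
  show ?case
    by (simp add: q pCons.IH matrix_vector_right_distrib vector_sadd_rdistrib algebra_simps)
qed simp

lemma pv_smult: "pv (smult c p) S x = c *s pv p S x"
  by (induction p) (simp_all add: mv_scale vector_add_ldistrib vector_smult_assoc)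

lemma pv_linfac: "pv ([:-r,1:] * q) S x = (S - mat r) *v pv q S x"
proof -
  have eq: "[:-r,1:] * q = smult (-r) q + pCons 0 q" by (simp add: mult_pCons_left)
  have "pv ([:-r,1:] * q) S x = (-r) *s pv q S x + (0 *s x + S *v pv q S x)"
    by (simp only: eq pv_add pv_smult pv_pCons)
  also have "\<dots> = (S - mat r) *v pv q S x"
    by (simp add: matrix_vector_mult_diff_rdistrib mat_vec)
  finally show ?thesis .
qed

lemma pv_one[simp]: "pv 1 S x = x"
  by (simp add: one_pCons)

fun prodm :: "('n::finite) cm \<Rightarrow> complex list \<Rightarrow> ('n::finite) cm" where
  "prodm S [] = mat 1"
| "prodm S (r # rs) = (S - mat r) ** prodm S rs"

lemma pv_prod: "\<exists>rs. \<forall>x. pv (\<Prod>i<(n::nat). [:-rt i, 1:]) S x = prodm S rs *v x"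
proof (induction n)
  case 0
  then show ?case by (intro exI[of _ "[]"]) simp
next
  case (Suc n)
  then obtain rs where rs: "\<forall>x. pv (\<Prod>i<n. [:-rt i, 1:]) S x = prodm S rs *v x" by blast
  have eq: "(\<Prod>i<Suc n. [:-rt i, 1:]) = [:-rt n, 1:] * (\<Prod>i<n. [:-rt i, 1:])"
    by (simp add: mult.commute)
  show ?case
  proof (intro exI[of _ "rt n # rs"] allI)
    fix x
    show "pv (\<Prod>i<Suc n. [:-rt i, 1:]) S x = prodm S (rt n # rs) *v x"
      by (simp only: eq pv_linfac rs prodm.simps matrix_vector_mul_assoc)
  qed
qed

lemma pv_monom: "pv (monom a i) S x = a *s (((*v) S) ^^ i) x"
  by (induction i) (simp_all add: monom_0 monom_Suc mv_scale)

lemma pv_sum: "pv (\<Sum>i\<in>I. f i) S x = (\<Sum>i\<in>I. pv (f i) S x)"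
  by (induction I rule: infinite_finite_induct) (simp_all add: pv_add)


lemma annih_coeffs:
  fixes S :: "('n::finite) cm" and x :: "complex^'n"
  defines "f \<equiv> \<lambda>i. (((*v) S) ^^ i) x"
  shows "\<exists>c. (\<exists>i\<le>CARD('n). c i \<noteq> 0) \<and> (\<Sum>i\<le>CARD('n). c i *s f i) = 0"
proof (cases "inj_on f {..CARD('n)}")
  case True
  let ?V = "f ` {..CARD('n)}"
  have fin: "finite ?V" by simp
  have "card ?V = Suc (CARD('n))" using True by (simp add: card_image)
  moreover have "vec.dim ?V \<le> CARD('n)" by (rule dim_subset_UNIV_cart_gen)
  ultimately have "vec.dependent ?V" by (intro vec.dependent_biggerset_general) simp
  then obtain u where u: "\<exists>v\<in>?V. u v \<noteq> 0" "(\<Sum>v\<in>?V. u v *s v) = 0"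
    using vec.dependent_finite[OF fin] by blast
  have "(\<Sum>v\<in>?V. u v *s v) = (\<Sum>i\<le>CARD('n). u (f i) *s f i)"
    using True by (simp add: sum.reindex)
  then show ?thesis using u by (intro exI[of _ "u \<circ> f"]) auto
next
  case False
  then obtain i j where ij: "i \<le> CARD('n)" "j \<le> CARD('n)" "i \<noteq> j" "f i = f j"
    unfolding inj_on_def by auto
  define c where "c = (\<lambda>k. if k = i then (1::complex) else if k = j then -1 else 0)"
  have "\<And>k. c k *s f k = (if k = i then f i else 0) + (if k = j then - f j else 0)"
    using ij(3) by (simp add: c_def)
  then have "(\<Sum>k\<le>CARD('n). c k *s f k) =
     (\<Sum>k\<le>CARD('n). (if k = i then f i else 0)) + (\<Sum>k\<le>CARD('n). (if k = j then - f j else 0))"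
    by (simp add: sum.distrib)
  also have "\<dots> = 0" using ij by simp
  finally show ?thesis using ij by (intro exI[of _ c]) (auto simp: c_def)
qed

lemma annih:
  fixes S :: "('n::finite) cm" and x :: "complex^'n"
  shows "\<exists>rs. prodm S rs *v x = 0"
proof -
  define f where "f \<equiv> \<lambda>i. (((*v) S) ^^ i) x"
  obtain c where c: "\<exists>i\<le>CARD('n). c i \<noteq> 0" "(\<Sum>i\<le>CARD('n). c i *s f i) = 0"
    using annih_coeffs[of S x] unfolding f_def by blast
  define p where "p = (\<Sum>i\<le>CARD('n). monom (c i) i)"
  have "pv p S x = (\<Sum>i\<le>CARD('n). c i *s f i)"
    by (simp add: p_def pv_sum pv_monom f_def)
  then have pv0: "pv p S x = 0" using c by simp
  have "p \<noteq> 0"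
  proof
    assume "p = 0"
    obtain i where i: "i \<le> CARD('n)" "c i \<noteq> 0" using c by blast
    have "coeff p i = c i" using i by (simp add: p_def coeff_sum coeff_monom)
    with i \<open>p = 0\<close> show False by simp
  qed
  obtain rt where rt: "smult (lead_coeff p) (\<Prod>i<degree p. [:-rt i, 1:]) = p"
    using complex_poly_decompose' by blast
  obtain rs where rs: "\<forall>y. pv (\<Prod>i<degree p. [:-rt i, 1:]) S y = prodm S rs *v y"
    using pv_prod by blast
  have "lead_coeff p *s (prodm S rs *v x) = 0"
    using pv0 rt rs pv_smult by metis
  moreover have "lead_coeff p \<noteq> 0" using \<open>p \<noteq> 0\<close> by simp
  ultimately show ?thesis by (auto simp: vec_eq_iff)
qed

lemma mat_mul_mat: "mat a ** (mat b :: ('n::finite) cm) = mat (a*b)"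
  by (subst mat_mul_l) (simp add: mat_def vec_eq_iff)

lemma fac_comm: "(S - mat a) ** (S - mat r) = (S - mat r) ** (S - mat (a::complex) :: ('n::finite) cm)"
  by (simp only: mm_sub_l mm_sub_r mat_comm[of a S] mat_comm[of r S] mat_mul_mat mult.commute[of a r])
    (simp add: algebra_simps)

lemma prodm_remove1: "r \<in> set rs \<Longrightarrow> prodm S rs = (S - mat r) ** prodm S (remove1 r rs)"
proof (induction rs)
  case (Cons a rs)
  show ?case
  proof (cases "a = r")
    case False
    then have "prodm S (a # rs) = (S - mat a) ** ((S - mat r) ** prodm S (remove1 r rs))"
      using Cons by simp
    also have "\<dots> = (S - mat r) ** ((S - mat a) ** prodm S (remove1 r rs))"
      by (simp only: matrix_mul_assoc fac_comm)
    finally show ?thesis using False by simp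
  qed simp
qed simp

lemma prodm_comm: fixes B D S :: "('n::finite) cm" shows "B ** D = D ** S \<Longrightarrow> prodm B rs ** D = D ** prodm S rs"
proof (induction rs)
  case Nil then show ?case by simp
next
  case (Cons r rs)
  have "prodm B (r # rs) ** D = (B - mat r) ** (prodm B rs ** D)"
    by (simp add: matrix_mul_assoc)
  also have "\<dots> = (B - mat r) ** (D ** prodm S rs)"
    using Cons by simp
  also have "\<dots> = ((B - mat r) ** D) ** prodm S rs" by (simp add: matrix_mul_assoc)
  also have "(B - mat r) ** D = D ** (S - mat r)"
    using Cons.prems by (simp add: mm_sub_l mm_sub_r mat_comm[of r D])
  finally show ?case by (simp add: matrix_mul_assoc)
qed

lemma prodm_eig: "prodm B rs *v y = 0 \<Longrightarrow> y \<noteq> 0 \<Longrightarrow> \<exists>r\<in>set rs. is_eigenvalue B r"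
proof (induction rs)
  case Nil then show ?case by simp
next
  case (Cons r rs)
  show ?case
  proof (cases "prodm B rs *v y = 0")
    case True then show ?thesis using Cons by auto
  next
    case False
    have "(B - mat r) *v (prodm B rs *v y) = 0"
      using Cons.prems by (simp add: matrix_vector_mul_assoc)
    then show ?thesis using False eig_iff by auto
  qed
qed

lemma sylvester:
  fixes B D S :: "('n::finite) cm"
  assumes "B ** D = D ** S" and "\<forall>z. is_eigenvalue B z \<longrightarrow> \<not> is_eigenvalue S z"
  shows "D = 0"
proof (rule ccontr)
  assume "D \<noteq> 0"
  then obtain x where x: "D *v x \<noteq> 0" using matrix_eq[of D 0] by auto
  then have "x \<noteq> 0" by auto
  obtain rs0 where "prodm S rs0 *v x = 0" using annih by blast
  then obtain rs where rs: "prodm S rs *v x = 0"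
    and minr: "\<forall>rs'. prodm S rs' *v x = 0 \<longrightarrow> length rs \<le> length rs'"
    using ex_has_least_nat[of "\<lambda>rs. prodm S rs *v x = 0" rs0 length] by blast
  have eigS: "is_eigenvalue S r" if "r \<in> set rs" for r
  proof -
    have "length (remove1 r rs) < length rs" using that by (simp add: length_remove1)
      (metis One_nat_def Suc_pred length_pos_if_in_set lessI)
    then have ne: "prodm S (remove1 r rs) *v x \<noteq> 0" using minr by force
    have "(S - mat r) *v (prodm S (remove1 r rs) *v x) = 0"
      using rs prodm_remove1[OF that, of S] by (simp add: matrix_vector_mul_assoc)
    then show ?thesis using ne eig_iff by blast
  qed
  have "prodm B rs *v (D *v x) = D *v (prodm S rs *v x)"
    using prodm_comm[OF assms(1)] by (simp add: matrix_vector_mul_assoc)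
  then have "prodm B rs *v (D *v x) = 0" using rs by simp
  then obtain r where "r \<in> set rs" "is_eigenvalue B r" using prodm_eig x by blast
  then show False using eigS assms(2) by blast
qed


lemma care_cadj:
  assumes "hermitian G" "hermitian Q" "care_solution A G Q X"
  shows "care_solution A G Q (cadj X)"
proof -
  have "cadj (cadj A ** X + X ** A + Q) = cadj (X ** G ** X)"
    using assms(3) unfolding care_solution_def by simp
  then show ?thesis using assms(1,2) unfolding care_solution_def hermitian_def
    by (simp add: cadj_add cadj_mul cadj_cadj matrix_mul_assoc algebra_simps)
qed

lemma riccati_diff:
  assumes "care_solution A G Q X1" "care_solution A G Q X2"
  shows "(cadj A - X2 ** G) ** (X1 - X2) = (X1 - X2) ** (G ** X1 - A)"
proof -
  have e1: "cadj A ** X1 = X1 ** G ** X1 - X1 ** A - Q"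
    using assms(1) unfolding care_solution_def by (simp add: algebra_simps)
  have e2: "cadj A ** X2 = X2 ** G ** X2 - X2 ** A - Q"
    using assms(2) unfolding care_solution_def by (simp add: algebra_simps)
  show ?thesis
    by (simp add: mm_sub_l mm_sub_r matrix_mul_assoc e1 e2)
qed

lemma mv_neg: "(- M :: ('n::finite) cm) *v v = - (M *v v)"
  by (simp add: matrix_vector_mult_def vec_eq_iff sum_negf)

lemma eig_neg: "is_eigenvalue (- M :: ('n::finite) cm) z \<Longrightarrow> is_eigenvalue M (- z)"
  unfolding is_eigenvalue_def
  by (metis mv_neg minus_minus vector_sneg_minus1 vector_smult_assoc mult_minus1)

lemma uniq_diff:
  fixes A G Q X1 X2 :: "('n::finite) cm"
  assumes "care_solution A G Q X1" "care_solution A G Q X2" "hermitian G"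
    "hurwitz_stable (A - G ** X1)" "hurwitz_stable (A - G ** cadj X2)"
  shows "X1 = X2"
proof -
  have B: "cadj A - X2 ** G = cadj (A - G ** cadj X2)"
    using assms(3) by (simp add: hermitian_def cadj_sub cadj_mul cadj_cadj)
  have S: "G ** X1 - A = - (A - G ** X1)" by simp
  have "X1 - X2 = 0"
  proof (rule sylvester[OF riccati_diff[OF assms(1,2)]], intro allI impI notI)
    fix z assume z1: "is_eigenvalue (cadj A - X2 ** G) z" and z2: "is_eigenvalue (G ** X1 - A) z"
    from z1 have "is_eigenvalue (A - G ** cadj X2) (cnj z)" unfolding B by (rule eig_cadj)
    then have "Re z < 0" using assms(5) unfolding hurwitz_stable_def by fastforce
    from z2 have "is_eigenvalue (A - G ** X1) (- z)" unfolding S by (rule eig_neg)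
    then have "Re (- z) < 0" using assms(4) unfolding hurwitz_stable_def by blast
    with \<open>Re z < 0\<close> show False by simp
  qed
  then show ?thesis by simp
qed

theorem mainTheorem6:
  fixes A G Q L U :: "complex^'n^'n"
  assumes "hermitian G" and "hermitian Q"
    and "\<exists>X\<in>interval_matrix L U. care_solution A G Q X"
    and "\<forall>M\<in>interval_matrix L U. hurwitz_stable (A - G ** M)"
  shows "(\<exists>!X. X \<in> interval_matrix L U \<and> care_solution A G Q X) \<and>
         (\<forall>X\<in>interval_matrix L U. care_solution A G Q X \<longrightarrow> stabilizing_solution A G Q X)"
proof -
  have herm: "hermitian X" if "X \<in> interval_matrix L U" "care_solution A G Q X" for X
  proof -
    have "X = cadj X"
      using uniq_diff[OF that(2) care_cadj[OF assms(1,2) that(2)] assms(1)] assms(4) that(1)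
      by (simp add: cadj_cadj)
    then show ?thesis by (simp add: hermitian_def)
  qed
  have uniq: "X1 = X2" if "X1 \<in> interval_matrix L U" "care_solution A G Q X1"
     "X2 \<in> interval_matrix L U" "care_solution A G Q X2" for X1 X2
  proof -
    have "cadj X2 = X2" using herm[OF that(3,4)] by (simp add: hermitian_def)
    then show ?thesis
      using uniq_diff[OF that(2) that(4) assms(1)] assms(4) that(1,3) by simp
  qed
  show ?thesis
  proof
    show "\<exists>!X. X \<in> interval_matrix L U \<and> care_solution A G Q X"
      using assms(3) uniq by blast
    show "\<forall>X\<in>interval_matrix L U. care_solution A G Q X \<longrightarrow> stabilizing_solution A G Q X"
      using herm assms(4) by (simp add: stabilizing_solution_def)
  qed
qed

end
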